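(* Let $(\Omega,\mathcal F)$ be a measurable space and $w$ a capacity. Then $\{\mathrm{ES}^w_\alpha\}_{\alpha\in(0,1]}$ is a decreasing family of coherent risk measures if and only if $w$ is submodular.
   Context: A capacity is an increasing function $w:\mathcal F\to\mathbb R$ with $w(\varnothing)=0$, $w(\Omega)=1$; it is submodular if $w(A\cup B)+w(A\cap B)\le w(A)+w(B)$ for all $A,B\in\mathcal F$. For bounded measurable $X$ and $t\in(0,1)$, $\mathrm{VaR}^w_t(X)=\inf\{x\in\mathbb R:w(X\ge x)\le t\}$, and $\mathrm{ES}^w_\alpha(X)=\frac1\alpha\int_0^\alpha\mathrm{VaR}^w_t(X)\,\mathrm dt$. A coherent risk measure on bounded measurable functions is a mapping that is monotone, translation invariant ($\mathcal R(X+c)=\mathcal R(X)+c$), positively homogeneous and convex. "Decreasing family" means $\mathrm{ES}^w_\alpha(X)\ge\mathrm{ES}^w_\beta(X)$ whenever $\alpha\le\beta$. *)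

theory Defs
  imports "HOL-Analysis.Analysis"
begin

text \<open>The measurable space (Omega, F) is represented by a measure M
  (only space M and sets M are used).  A capacity is a set function on sets M.\<close>

definition capacity :: "'a measure \<Rightarrow> ('a set \<Rightarrow> real) \<Rightarrow> bool" where
  "capacity M w \<longleftrightarrow>
     (\<forall>A\<in>sets M. \<forall>B\<in>sets M. A \<subseteq> B \<longrightarrow> w A \<le> w B) \<and>
     w {} = 0 \<and> w (space M) = 1"

definition submodular_cap :: "'a measure \<Rightarrow> ('a set \<Rightarrow> real) \<Rightarrow> bool" where
  "submodular_cap M w \<longleftrightarrow>
     (\<forall>A\<in>sets M. \<forall>B\<in>sets M. w (A \<union> B) + w (A \<inter> B) \<le> w A + w B)"

definition bdd_meas :: "'a measure \<Rightarrow> ('a \<Rightarrow> real) set" where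
  "bdd_meas M = {X. X \<in> borel_measurable M \<and> bounded (X ` space M)}"

definition VaR :: "'a measure \<Rightarrow> ('a set \<Rightarrow> real) \<Rightarrow> ('a \<Rightarrow> real) \<Rightarrow> real \<Rightarrow> real" where
  "VaR M w X t = Inf {x. w {\<omega>\<in>space M. X \<omega> \<ge> x} \<le> t}"

definition ES :: "'a measure \<Rightarrow> ('a set \<Rightarrow> real) \<Rightarrow> real \<Rightarrow> ('a \<Rightarrow> real) \<Rightarrow> real" where
  "ES M w \<alpha> X = (1 / \<alpha>) * (LBINT t=0..\<alpha>. VaR M w X t)"

definition coherent :: "'a measure \<Rightarrow> (('a \<Rightarrow> real) \<Rightarrow> real) \<Rightarrow> bool" where
  "coherent M R \<longleftrightarrow>
     (\<forall>X\<in>bdd_meas M. \<forall>Y\<in>bdd_meas M. (\<forall>\<omega>\<in>space M. X \<omega> \<le> Y \<omega>) \<longrightarrow> R X \<le> R Y) \<and>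
     (\<forall>X\<in>bdd_meas M. \<forall>c::real. R (\<lambda>\<omega>. X \<omega> + c) = R X + c) \<and>
     (\<forall>X\<in>bdd_meas M. \<forall>l::real. l > 0 \<longrightarrow> R (\<lambda>\<omega>. l * X \<omega>) = l * R X) \<and>
     (\<forall>X\<in>bdd_meas M. \<forall>Y\<in>bdd_meas M. \<forall>l::real. 0 \<le> l \<and> l \<le> 1 \<longrightarrow>
        R (\<lambda>\<omega>. l * X \<omega> + (1 - l) * Y \<omega>) \<le> l * R X + (1 - l) * R Y)"

end

theory Submission
  imports Defs
begin


definition Uset :: "'a measure \<Rightarrow> ('a \<Rightarrow> real) \<Rightarrow> real \<Rightarrow> 'a set" where
  "Uset M X x = {\<omega>\<in>space M. x \<le> X \<omega>}"

definition Ch :: "'a measure \<Rightarrow> ('a set \<Rightarrow> real) \<Rightarrow> ('a \<Rightarrow> real) \<Rightarrow> real" where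
  "Ch M \<nu> X = (\<integral>x. \<nu> (Uset M X x) - indicator {..0} x \<partial>lborel)"

lemma bdd_measD:
  assumes "X \<in> bdd_meas M"
  shows "X \<in> borel_measurable M" "\<exists>K>0. \<forall>\<omega>\<in>space M. \<bar>X \<omega>\<bar> \<le> K"
proof -
  show "X \<in> borel_measurable M" using assms by (simp add: bdd_meas_def)
  from assms have "bounded (X ` space M)" by (simp add: bdd_meas_def)
  then obtain K where K: "\<forall>y\<in>X ` space M. norm y \<le> K" by (auto simp: bounded_iff)
  show "\<exists>K>0. \<forall>\<omega>\<in>space M. \<bar>X \<omega>\<bar> \<le> K"
    by (rule exI[of _ "\<bar>K\<bar> + 1"]) (use K in force)
qed

lemma bdd_measI:
  assumes "X \<in> borel_measurable M" "\<And>\<omega>. \<omega> \<in> space M \<Longrightarrow> \<bar>X \<omega>\<bar> \<le> K"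
  shows "X \<in> bdd_meas M"
  using assms unfolding bdd_meas_def bounded_iff by auto

lemma Uset_sets[measurable]: "X \<in> borel_measurable M \<Longrightarrow> Uset M X x \<in> sets M"
  unfolding Uset_def by measurable

lemma Uset_anti: "x \<le> y \<Longrightarrow> Uset M X y \<subseteq> Uset M X x"
  unfolding Uset_def by auto

lemma cap_mono: "capacity M \<nu> \<Longrightarrow> A \<in> sets M \<Longrightarrow> B \<in> sets M \<Longrightarrow> A \<subseteq> B \<Longrightarrow> \<nu> A \<le> \<nu> B"
  unfolding capacity_def by auto

lemma cap_bounds:
  assumes "capacity M \<nu>" "A \<in> sets M"
  shows "0 \<le> \<nu> A" "\<nu> A \<le> 1"
proof -
  have "A \<subseteq> space M" using assms(2) sets.sets_into_space by auto
  then show "\<nu> A \<le> 1" using assms cap_mono[of M \<nu> A "space M"] by (auto simp: capacity_def)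
  show "0 \<le> \<nu> A" using assms cap_mono[of M \<nu> "{}" A] by (auto simp: capacity_def)
qed

lemma antitone_meas:
  fixes f :: "real \<Rightarrow> real"
  assumes "\<And>x y. x \<le> y \<Longrightarrow> f y \<le> f x"
  shows "f \<in> borel_measurable borel"
proof -
  have "mono (\<lambda>x. - f x)" using assms by (auto simp: mono_def)
  then have "(\<lambda>x. - f x) \<in> borel_measurable borel" by (rule borel_measurable_mono)
  then have "(\<lambda>x. - (- f x)) \<in> borel_measurable borel" by measurable
  then show ?thesis by simp
qed

lemma integrable_supp:
  fixes f :: "real \<Rightarrow> real"
  assumes "f \<in> borel_measurable borel" "\<And>x. \<bar>f x\<bar> \<le> B" "\<And>x. x \<notin> {a..b} \<Longrightarrow> f x = 0"
  shows "integrable lborel f"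
  by (rule integrableI_bounded_set[where A="{a..b}" and B=B]) (use assms in \<open>auto simp: emeasure_lborel_Icc_eq\<close>)

lemma cap_U_meas:
  assumes "capacity M \<nu>" "X \<in> borel_measurable M" "A \<in> sets M"
  shows "(\<lambda>x. \<nu> (A \<inter> Uset M X x)) \<in> borel_measurable borel"
proof (rule antitone_meas)
  fix x y :: real assume "x \<le> y"
  then have "A \<inter> Uset M X y \<subseteq> A \<inter> Uset M X x" using Uset_anti[of x y M X] by blast
  then show "\<nu> (A \<inter> Uset M X y) \<le> \<nu> (A \<inter> Uset M X x)"
    by (rule cap_mono[OF assms(1), rotated 2]) (use assms in auto)
qed

lemma U_low: "(\<And>\<omega>. \<omega> \<in> space M \<Longrightarrow> \<bar>X \<omega>\<bar> \<le> K) \<Longrightarrow> x \<le> -K \<Longrightarrow> Uset M X x = space M"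
  unfolding Uset_def by force
lemma U_high: "(\<And>\<omega>. \<omega> \<in> space M \<Longrightarrow> \<bar>X \<omega>\<bar> \<le> K) \<Longrightarrow> x > K \<Longrightarrow> Uset M X x = {}"
  unfolding Uset_def by force

lemma Ch_integrable:
  assumes cap: "capacity M \<nu>" and X: "X \<in> bdd_meas M"
  shows "integrable lborel (\<lambda>x. \<nu> (Uset M X x) - indicator {..0} x)"
proof -
  obtain K where K: "K > 0" "\<And>\<omega>. \<omega>\<in>space M \<Longrightarrow> \<bar>X \<omega>\<bar> \<le> K" using bdd_measD[OF X] by auto
  have Xm: "X \<in> borel_measurable M" using bdd_measD[OF X] by auto
  have m: "(\<lambda>x. \<nu> (space M \<inter> Uset M X x)) \<in> borel_measurable borel"
    by (rule cap_U_meas[OF cap Xm]) simp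
  have e: "space M \<inter> Uset M X x = Uset M X x" for x unfolding Uset_def by auto
  show ?thesis
  proof (rule integrable_supp[where B=1 and a="-K" and b=K])
    show "(\<lambda>x. \<nu> (Uset M X x) - indicator {..0} x) \<in> borel_measurable borel"
      using m unfolding e by measurable
    show "\<bar>\<nu> (Uset M X x) - indicator {..0} x\<bar> \<le> 1" for x
      using cap_bounds[OF cap Uset_sets[OF Xm, where x=x]] by (auto simp: indicator_def)
    show "\<nu> (Uset M X x) - indicator {..0} x = 0" if "x \<notin> {-K..K}" for x
    proof (cases "x < -K")
      case True then show ?thesis using U_low[of M X K x] K cap by (auto simp: capacity_def)
    next
      case False then have "x > K" using that by auto
      then show ?thesis using U_high[of M X K x] K cap by (auto simp: capacity_def)
    qed
  qed
qed

lemma ind_diff_integral: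
  "integrable lborel (\<lambda>y. indicator {..0} y - indicator {..d} y :: real) \<and>
   (\<integral>y. indicator {..0} y - indicator {..d} y \<partial>lborel) = - (d::real)"
proof (cases "d \<le> 0")
  case True
  have e: "(\<lambda>y. indicator {..0} y - indicator {..d} y :: real) = indicator {d<..0}"
    using True by (auto simp: indicator_def fun_eq_iff)
  show ?thesis unfolding e using True by auto
next
  case False
  have e: "(\<lambda>y. indicator {..0} y - indicator {..d} y :: real) = (\<lambda>y. - indicator {0<..d} y)"
    using False by (auto simp: indicator_def fun_eq_iff)
  show ?thesis unfolding e using False by auto
qed

lemma Ch_mono:
  assumes cap: "capacity M \<nu>" and X: "X \<in> bdd_meas M" and Y: "Y \<in> bdd_meas M"
    and le: "\<And>\<omega>. \<omega> \<in> space M \<Longrightarrow> X \<omega> \<le> Y \<omega>"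
  shows "Ch M \<nu> X \<le> Ch M \<nu> Y"
  unfolding Ch_def
proof (rule integral_mono[OF Ch_integrable[OF cap X] Ch_integrable[OF cap Y]])
  fix x
  have "Uset M X x \<subseteq> Uset M Y x" using le unfolding Uset_def by force
  moreover have "Uset M X x \<in> sets M" "Uset M Y x \<in> sets M"
    using X Y bdd_measD(1) Uset_sets by blast+
  ultimately show "\<nu> (Uset M X x) - indicator {..0} x \<le> \<nu> (Uset M Y x) - indicator {..0} x"
    using cap_mono[OF cap] by auto
qed

lemma Ch_trans:
  assumes cap: "capacity M \<nu>" and X: "X \<in> bdd_meas M"
  shows "Ch M \<nu> (\<lambda>\<omega>. X \<omega> + c) = Ch M \<nu> X + c"
proof -
  have U: "Uset M (\<lambda>\<omega>. X \<omega> + c) x = Uset M X (x - c)" for x unfolding Uset_def by auto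
  have "Ch M \<nu> (\<lambda>\<omega>. X \<omega> + c) = (\<integral>x. \<nu> (Uset M X (x - c)) - indicator {..0} x \<partial>lborel)"
    unfolding Ch_def U ..
  also have "\<dots> = (\<integral>y. \<nu> (Uset M X (c + 1 * y - c)) - indicator {..0} (c + 1 * y) \<partial>lborel)"
    using lborel_integral_real_affine[of 1 "\<lambda>x. \<nu> (Uset M X (x - c)) - indicator {..0} x" c] by simp
  also have "\<dots> = (\<integral>y. (\<nu> (Uset M X y) - indicator {..0} y) + (indicator {..0} y - indicator {..-c} y) \<partial>lborel)"
    by (rule Bochner_Integration.integral_cong) (auto simp: indicator_def)
  also have "\<dots> = Ch M \<nu> X + c"
    unfolding Ch_def using Ch_integrable[OF cap X] ind_diff_integral[of "-c"]
    by (subst Bochner_Integration.integral_add) auto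
  finally show ?thesis .
qed

lemma Ch_homog:
  assumes cap: "capacity M \<nu>" and X: "X \<in> bdd_meas M" and l: "l > 0"
  shows "Ch M \<nu> (\<lambda>\<omega>. l * X \<omega>) = l * Ch M \<nu> X"
proof -
  have U: "Uset M (\<lambda>\<omega>. l * X \<omega>) x = Uset M X (x / l)" for x
    unfolding Uset_def using l by (auto simp: field_simps)
  have "Ch M \<nu> (\<lambda>\<omega>. l * X \<omega>) = (\<integral>x. \<nu> (Uset M X (x / l)) - indicator {..0} x \<partial>lborel)"
    unfolding Ch_def U ..
  also have "\<dots> = l * (\<integral>y. \<nu> (Uset M X ((0 + l * y) / l)) - indicator {..0} (0 + l * y) \<partial>lborel)"
    using lborel_integral_real_affine[of l "\<lambda>x. \<nu> (Uset M X (x / l)) - indicator {..0} x" 0] l by simp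
  also have "(\<integral>y. \<nu> (Uset M X ((0 + l * y) / l)) - indicator {..0} (0 + l * y) \<partial>lborel) = Ch M \<nu> X"
    unfolding Ch_def
    by (rule Bochner_Integration.integral_cong) (use l in \<open>auto simp: indicator_def zero_le_mult_iff mult_le_0_iff\<close>)
  finally show ?thesis .
qed

lemma Ch_step:
  assumes cap: "capacity M \<nu>" and sub: "submodular_cap M \<nu>" and Z: "Z \<in> bdd_meas M"
    and A: "A \<in> sets M" and c: "c \<ge> 0"
  shows "Ch M \<nu> (\<lambda>\<omega>. Z \<omega> + c * indicator A \<omega>) \<le> Ch M \<nu> Z + c * \<nu> A"
proof -
  have Zm[measurable]: "Z \<in> borel_measurable M" using bdd_measD[OF Z] by auto
  obtain K where K: "K > 0" "\<forall>\<omega>\<in>space M. \<bar>Z \<omega>\<bar> \<le> K" using bdd_measD[OF Z] by auto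
  define G where "G x = \<nu> (A \<inter> Uset M Z x) - \<nu> A * indicator {..0} x" for x
  have nA: "0 \<le> \<nu> A" "\<nu> A \<le> 1" using cap_bounds[OF cap A] by auto
  have AU: "A \<inter> Uset M Z x \<in> sets M" for x using A Zm by auto
  have Gi: "integrable lborel G"
  proof (rule integrable_supp[where B=2 and a="-K" and b=K])
    show "G \<in> borel_measurable borel"
      unfolding G_def using cap_U_meas[OF cap Zm A] by measurable
    show "\<bar>G x\<bar> \<le> 2" for x
      using cap_bounds[OF cap AU[of x]] nA unfolding G_def by (auto simp: indicator_def)
    show "G x = 0" if "x \<notin> {-K..K}" for x
    proof (cases "x < -K")
      case True
      then have "A \<inter> Uset M Z x = A" using U_low[of M Z K x] K A sets.sets_into_space by auto
      then show ?thesis using True K unfolding G_def by auto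
    next
      case False then have "x > K" using that by auto
      then show ?thesis using U_high[of M Z K x] K cap unfolding G_def by (auto simp: capacity_def)
    qed
  qed
  have Gi2: "integrable lborel (\<lambda>x. G (x - c))"
    using lborel_integrable_real_affine[OF Gi, of 1 "-c"] by simp
  have Gint: "(\<integral>x. G (x - c) \<partial>lborel) = (\<integral>x. G x \<partial>lborel)"
    using lborel_integral_real_affine[of 1 G "-c"] by simp
  define W where "W = (\<lambda>\<omega>. Z \<omega> + c * indicator A \<omega>)"
  have W: "W \<in> bdd_meas M"
  proof (rule bdd_measI[where K="K + c"])
    show "W \<in> borel_measurable M" unfolding W_def using A by measurable
    show "\<bar>W \<omega>\<bar> \<le> K + c" if "\<omega> \<in> space M" for \<omega>
      using K that c unfolding W_def by (auto simp: indicator_def)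
  qed
  have UW: "Uset M W x = Uset M Z x \<union> (A \<inter> Uset M Z (x - c))" for x
    unfolding Uset_def W_def using c by (auto simp: indicator_def)
  have pw: "\<nu> (Uset M W x) - indicator {..0} x \<le>
     (\<nu> (Uset M Z x) - indicator {..0} x) + (G (x - c) - G x)
       - \<nu> A * (indicator {..0} x - indicator {..c} x)" for x
  proof -
    have int: "Uset M Z x \<inter> (A \<inter> Uset M Z (x - c)) = A \<inter> Uset M Z x"
      using Uset_anti[of "x - c" x M Z] c by auto
    have "\<nu> (Uset M Z x \<union> (A \<inter> Uset M Z (x - c))) + \<nu> (Uset M Z x \<inter> (A \<inter> Uset M Z (x - c)))
        \<le> \<nu> (Uset M Z x) + \<nu> (A \<inter> Uset M Z (x - c))"
      using sub AU[of "x - c"] Uset_sets[OF Zm] unfolding submodular_cap_def by blast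
    then show ?thesis unfolding UW int G_def by (auto simp: indicator_def)
  qed
  have "Ch M \<nu> W \<le> (\<integral>x. (\<nu> (Uset M Z x) - indicator {..0} x) + (G (x - c) - G x)
       - \<nu> A * (indicator {..0} x - indicator {..c} x) \<partial>lborel)"
    unfolding Ch_def
    by (rule integral_mono[OF Ch_integrable[OF cap W]])
       (use pw Ch_integrable[OF cap Z] Gi Gi2 ind_diff_integral[of c] in auto)
  also have "\<dots> = Ch M \<nu> Z + c * \<nu> A"
    unfolding Ch_def using Ch_integrable[OF cap Z] Gi Gi2 ind_diff_integral[of c] Gint
    by (simp add: Bochner_Integration.integral_add Bochner_Integration.integral_diff)
  finally show ?thesis unfolding W_def .
qed

lemma Ch_cong:
  "(\<And>\<omega>. \<omega> \<in> space M \<Longrightarrow> X \<omega> = Y \<omega>) \<Longrightarrow> Ch M \<nu> X = Ch M \<nu> Y"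
proof -
  assume "\<And>\<omega>. \<omega> \<in> space M \<Longrightarrow> X \<omega> = Y \<omega>"
  then have "Uset M X = Uset M Y" unfolding Uset_def by (auto simp: fun_eq_iff)
  then show ?thesis unfolding Ch_def by simp
qed

lemma sum_ind_le1:
  fixes h :: real assumes h: "h > 0"
  shows "(\<Sum>j<N. indicator {real j * h - h <.. real j * h} x) \<le> (1::real)"
proof (cases "\<exists>j<N. x \<in> {real j * h - h <.. real j * h}")
  case False
  then have "(\<Sum>j<N. indicator {real j * h - h <.. real j * h} x) = (\<Sum>j<N. 0::real)"
    by (intro sum.cong) (auto simp: indicator_def)
  then show ?thesis by simp
next
  case True
  then obtain j0 where j0: "j0 < N" "x \<in> {real j0 * h - h <.. real j0 * h}" by blast
  have other: "x \<notin> {real j * h - h <.. real j * h}" if "j \<noteq> j0" for j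
  proof
    assume xj: "x \<in> {real j * h - h <.. real j * h}"
    show False
    proof (cases "j < j0")
      case True
      then have "real j + 1 \<le> real j0" by linarith
      then have "real j * h + h \<le> real j0 * h" using h by (metis distrib_right mult_1 mult_le_cancel_right_pos)
      then show False using xj j0 by auto
    next
      case False
      then have "real j0 + 1 \<le> real j" using that by linarith
      then have "real j0 * h + h \<le> real j * h" using h by (metis distrib_right mult_1 mult_le_cancel_right_pos)
      then show False using xj j0 by auto
    qed
  qed
  have "(\<Sum>j<N. indicator {real j * h - h <.. real j * h} x) =
      indicator {real j0 * h - h <.. real j0 * h} x + (\<Sum>j\<in>{..<N} - {j0}. indicator {real j * h - h <.. real j * h} x)"
    using j0 by (subst sum.remove[of _ j0]) auto
  also have "(\<Sum>j\<in>{..<N} - {j0}. indicator {real j * h - h <.. real j * h} x) = (\<Sum>j\<in>{..<N} - {j0}. 0::real)"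
    by (intro sum.cong) (use other in \<open>auto simp: indicator_def\<close>)
  finally show ?thesis by (simp add: indicator_def)
qed

lemma Ch_subadd_pos:
  assumes cap: "capacity M \<nu>" and sub: "submodular_cap M \<nu>" and X: "X \<in> bdd_meas M"
    and Y: "Y \<in> bdd_meas M" and Ypos: "\<And>\<omega>. \<omega> \<in> space M \<Longrightarrow> 0 \<le> Y \<omega> \<and> Y \<omega> \<le> B"
    and N: "N > 0"
  shows "Ch M \<nu> (\<lambda>\<omega>. X \<omega> + Y \<omega>) \<le> Ch M \<nu> X + Ch M \<nu> Y + B / real N"
proof -
  have Xm[measurable]: "X \<in> borel_measurable M" using bdd_measD[OF X] by auto
  have Ym[measurable]: "Y \<in> borel_measurable M" using bdd_measD[OF Y] by auto
  obtain K where K: "K > 0" "\<forall>\<omega>\<in>space M. \<bar>X \<omega>\<bar> \<le> K" using bdd_measD[OF X] by auto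
  have B0: "B \<ge> 0"
  proof -
    obtain \<omega> where "\<omega> \<in> space M"
      using cap unfolding capacity_def by (metis equals0I zero_neq_one)
    then show ?thesis using Ypos by force
  qed
  define h where "h = B / real N"
  have h0: "h \<ge> 0" unfolding h_def using B0 by auto
  define Ac where "Ac j = {\<omega>\<in>space M. real j * h < Y \<omega>}" for j :: nat
  have Ac[measurable]: "Ac j \<in> sets M" for j unfolding Ac_def by measurable
  define F where "F k = (\<lambda>\<omega>. X \<omega> + min (Y \<omega>) (real k * h))" for k :: nat
  have Fb: "F k \<in> bdd_meas M" for k
  proof (rule bdd_measI[where K="K + B"])
    show "F k \<in> borel_measurable M" unfolding F_def by measurable
    show "\<bar>F k \<omega>\<bar> \<le> K + B" if "\<omega> \<in> space M" for \<omega>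
    proof -
      have "\<bar>X \<omega>\<bar> \<le> K" "0 \<le> min (Y \<omega>) (real k * h)" "min (Y \<omega>) (real k * h) \<le> B"
        using K that Ypos[OF that] h0 by auto
      then show ?thesis unfolding F_def by linarith
    qed
  qed
  have step1: "Ch M \<nu> (F k) \<le> Ch M \<nu> X + h * (\<Sum>j<k. \<nu> (Ac j))" for k
  proof (induction k)
    case 0
    have "Ch M \<nu> (F 0) = Ch M \<nu> X" by (rule Ch_cong) (use Ypos in \<open>auto simp: F_def\<close>)
    then show ?case by simp
  next
    case (Suc k)
    define G where "G = (\<lambda>\<omega>. F k \<omega> + h * indicator (Ac k) \<omega>)"
    have Gb: "G \<in> bdd_meas M"
    proof (rule bdd_measI[where K="K + B + h"])
      show "G \<in> borel_measurable M" unfolding G_def F_def by measurable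
      show "\<bar>G \<omega>\<bar> \<le> K + B + h" if "\<omega> \<in> space M" for \<omega>
      proof -
        have "\<bar>X \<omega>\<bar> \<le> K" "0 \<le> min (Y \<omega>) (real k * h)" "min (Y \<omega>) (real k * h) \<le> B"
          "0 \<le> h * indicator (Ac k) \<omega>" "h * indicator (Ac k) \<omega> \<le> h"
          using K that Ypos[OF that] h0 by (auto simp: indicator_def)
        then show ?thesis unfolding G_def F_def by linarith
      qed
    qed
    have "Ch M \<nu> (F (Suc k)) \<le> Ch M \<nu> G"
    proof (rule Ch_mono[OF cap Fb Gb])
      fix \<omega> assume "\<omega> \<in> space M"
      then show "F (Suc k) \<omega> \<le> G \<omega>"
        unfolding F_def G_def Ac_def by (auto simp: indicator_def min_def algebra_simps)
    qed
    also have "\<dots> \<le> Ch M \<nu> (F k) + h * \<nu> (Ac k)"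
      unfolding G_def by (rule Ch_step[OF cap sub Fb Ac h0])
    also have "\<dots> \<le> Ch M \<nu> X + h * (\<Sum>j<Suc k. \<nu> (Ac j))"
      using Suc by (simp add: algebra_simps)
    finally show ?case .
  qed
  have "Ch M \<nu> (F N) = Ch M \<nu> (\<lambda>\<omega>. X \<omega> + Y \<omega>)"
    by (rule Ch_cong) (use Ypos N in \<open>auto simp: F_def h_def\<close>)
  then have s1: "Ch M \<nu> (\<lambda>\<omega>. X \<omega> + Y \<omega>) \<le> Ch M \<nu> X + h * (\<Sum>j<N. \<nu> (Ac j))"
    using step1[of N] by simp
  \<comment> \<open>Riemann sum comparison\<close>
  define \<psi> where "\<psi> x = \<nu> (Uset M Y x) - indicator {..-h} x" for x
  have \<psi>e: "\<psi> x = (\<nu> (Uset M Y x) - indicator {..0} x) + (indicator {..0} x - indicator {..-h} x)" for x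
    unfolding \<psi>_def by simp
  have \<psi>i: "integrable lborel \<psi>"
    unfolding \<psi>e using Ch_integrable[OF cap Y] ind_diff_integral[of "-h"]
    by (intro Bochner_Integration.integrable_add) auto
  have \<psi>int: "(\<integral>x. \<psi> x \<partial>lborel) = Ch M \<nu> Y + h"
    unfolding \<psi>e Ch_def using Ch_integrable[OF cap Y] ind_diff_integral[of "-h"]
    by (subst Bochner_Integration.integral_add) auto
  have \<psi>0: "0 \<le> \<psi> x" for x
  proof (cases "x \<le> -h")
    case True
    then have "Uset M Y x = space M" unfolding Uset_def using Ypos h0 by force
    then show ?thesis using cap True unfolding \<psi>_def capacity_def by auto
  next
    case False then show ?thesis using cap_bounds[OF cap Uset_sets[OF Ym]] unfolding \<psi>_def by auto
  qed
  define I where "I j = {real j * h - h <.. real j * h}" for j :: nat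
  have le_j: "h * \<nu> (Ac j) \<le> (\<integral>x. \<psi> x * indicator (I j) x \<partial>lborel)" for j
  proof -
    have "h * \<nu> (Ac j) = (\<integral>x. \<nu> (Ac j) * indicator (I j) x \<partial>lborel)"
      using h0 unfolding I_def by simp
    also have "\<dots> \<le> (\<integral>x. \<psi> x * indicator (I j) x \<partial>lborel)"
    proof (rule integral_mono)
      show "integrable lborel (\<lambda>x. \<nu> (Ac j) * indicator (I j) x)" unfolding I_def
        by (intro integrable_mult_right integrable_real_indicator) (use h0 in auto)
      show "integrable lborel (\<lambda>x. \<psi> x * indicator (I j) x)"
        by (rule integrable_real_mult_indicator[OF _ \<psi>i]) (simp add: I_def)
      fix x
      show "\<nu> (Ac j) * indicator (I j) x \<le> \<psi> x * indicator (I j) x"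
      proof (cases "x \<in> I j")
        case True
        have jh: "0 \<le> real j * h" using h0 by simp
        have sub1: "Ac j \<subseteq> Uset M Y x" using True unfolding Ac_def Uset_def I_def by auto
        have "real j * h - h < x" using True unfolding I_def by simp
        then have "\<not> x \<le> -h" using jh by linarith
        with sub1 show ?thesis using True cap_mono[OF cap Ac Uset_sets[OF Ym]] unfolding \<psi>_def by auto
      qed simp
    qed
    finally show ?thesis .
  qed
  have "h * (\<Sum>j<N. \<nu> (Ac j)) = (\<Sum>j<N. h * \<nu> (Ac j))" by (simp add: sum_distrib_left)
  also have "\<dots> \<le> (\<Sum>j<N. (\<integral>x. \<psi> x * indicator (I j) x \<partial>lborel))"
    by (rule sum_mono) (rule le_j)
  also have "\<dots> = (\<integral>x. (\<Sum>j<N. \<psi> x * indicator (I j) x) \<partial>lborel)"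
    by (rule Bochner_Integration.integral_sum[symmetric]) (rule integrable_real_mult_indicator[OF _ \<psi>i], simp add: I_def)
  also have "\<dots> \<le> (\<integral>x. \<psi> x \<partial>lborel)"
  proof (rule integral_mono)
    show "integrable lborel (\<lambda>x. \<Sum>j<N. \<psi> x * indicator (I j) x)"
      by (rule Bochner_Integration.integrable_sum) (rule integrable_real_mult_indicator[OF _ \<psi>i], simp add: I_def)
    show "integrable lborel \<psi>" by (rule \<psi>i)
    fix x
    show "(\<Sum>j<N. \<psi> x * indicator (I j) x) \<le> \<psi> x"
    proof (cases "h > 0")
      case True
      have "(\<Sum>j<N. \<psi> x * indicator (I j) x) = \<psi> x * (\<Sum>j<N. indicator (I j) x)"
        by (simp add: sum_distrib_left)
      also have "\<dots> \<le> \<psi> x * 1"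
        by (rule mult_left_mono[OF _ \<psi>0]) (use sum_ind_le1[OF True, where N=N and x=x] in \<open>simp add: I_def\<close>)
      finally show ?thesis by simp
    next
      case False
      then have "I j = {}" for j unfolding I_def using h0 by auto
      then show ?thesis using \<psi>0[of x] by simp
    qed
  qed
  finally have "h * (\<Sum>j<N. \<nu> (Ac j)) \<le> Ch M \<nu> Y + h" using \<psi>int by simp
  then show ?thesis using s1 unfolding h_def by simp
qed

lemma bdd_add: "X \<in> bdd_meas M \<Longrightarrow> Y \<in> bdd_meas M \<Longrightarrow> (\<lambda>\<omega>. X \<omega> + Y \<omega>) \<in> bdd_meas M"
proof -
  assume X: "X \<in> bdd_meas M" and Y: "Y \<in> bdd_meas M"
  obtain K where K: "\<forall>\<omega>\<in>space M. \<bar>X \<omega>\<bar> \<le> K" using bdd_measD[OF X] by auto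
  obtain L where L: "\<forall>\<omega>\<in>space M. \<bar>Y \<omega>\<bar> \<le> L" using bdd_measD[OF Y] by auto
  have [measurable]: "X \<in> borel_measurable M" "Y \<in> borel_measurable M" using X Y bdd_measD by auto
  show ?thesis
  proof (rule bdd_measI[where K="K + L"])
    show "\<bar>X \<omega> + Y \<omega>\<bar> \<le> K + L" if "\<omega> \<in> space M" for \<omega>
      using K L that abs_triangle_ineq[of "X \<omega>" "Y \<omega>"] by force
  qed measurable
qed

lemma bdd_cmult: "X \<in> bdd_meas M \<Longrightarrow> (\<lambda>\<omega>. l * X \<omega>) \<in> bdd_meas M"
proof -
  assume X: "X \<in> bdd_meas M"
  obtain K where K: "\<forall>\<omega>\<in>space M. \<bar>X \<omega>\<bar> \<le> K" using bdd_measD[OF X] by auto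
  have [measurable]: "X \<in> borel_measurable M" using X bdd_measD by auto
  show ?thesis
  proof (rule bdd_measI[where K="\<bar>l\<bar> * K"])
    show "\<bar>l * X \<omega>\<bar> \<le> \<bar>l\<bar> * K" if "\<omega> \<in> space M" for \<omega>
      using K that by (simp add: abs_mult mult_left_mono)
  qed measurable
qed

lemma bdd_const: "(\<lambda>\<omega>. c) \<in> bdd_meas M"
  by (rule bdd_measI[where K="\<bar>c\<bar>"]) auto

lemma bdd_addc: "X \<in> bdd_meas M \<Longrightarrow> (\<lambda>\<omega>. X \<omega> + c) \<in> bdd_meas M"
  using bdd_add[OF _ bdd_const] by blast

lemma Ch_subadd:
  assumes cap: "capacity M \<nu>" and sub: "submodular_cap M \<nu>" and X: "X \<in> bdd_meas M"
    and Y: "Y \<in> bdd_meas M"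
  shows "Ch M \<nu> (\<lambda>\<omega>. X \<omega> + Y \<omega>) \<le> Ch M \<nu> X + Ch M \<nu> Y"
proof -
  obtain K where K: "K > 0" "\<forall>\<omega>\<in>space M. \<bar>Y \<omega>\<bar> \<le> K" using bdd_measD[OF Y] by auto
  define Y' where "Y' = (\<lambda>\<omega>. Y \<omega> + K)"
  have Y': "Y' \<in> bdd_meas M" unfolding Y'_def by (rule bdd_addc[OF Y])
  have XY: "(\<lambda>\<omega>. X \<omega> + Y \<omega>) \<in> bdd_meas M" by (rule bdd_add[OF X Y])
  have e1: "Ch M \<nu> (\<lambda>\<omega>. X \<omega> + Y' \<omega>) = Ch M \<nu> (\<lambda>\<omega>. X \<omega> + Y \<omega>) + K"
  proof -
    have "Ch M \<nu> (\<lambda>\<omega>. X \<omega> + Y' \<omega>) = Ch M \<nu> (\<lambda>\<omega>. (X \<omega> + Y \<omega>) + K)"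
      unfolding Y'_def by (simp add: add.assoc)
    also have "\<dots> = Ch M \<nu> (\<lambda>\<omega>. X \<omega> + Y \<omega>) + K" by (rule Ch_trans[OF cap XY])
    finally show ?thesis .
  qed
  have e2: "Ch M \<nu> Y' = Ch M \<nu> Y + K" unfolding Y'_def by (rule Ch_trans[OF cap Y])
  have b: "Ch M \<nu> (\<lambda>\<omega>. X \<omega> + Y \<omega>) \<le> Ch M \<nu> X + Ch M \<nu> Y + 2 * K / real N" if N: "N > 0" for N
  proof -
    have "Ch M \<nu> (\<lambda>\<omega>. X \<omega> + Y' \<omega>) \<le> Ch M \<nu> X + Ch M \<nu> Y' + 2 * K / real N"
      by (rule Ch_subadd_pos[OF cap sub X Y' _ N]) (use K in \<open>auto simp: Y'_def\<close>)
    then show ?thesis using e1 e2 by simp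
  qed
  show ?thesis
  proof (rule ccontr)
    assume "\<not> ?thesis"
    then have d: "Ch M \<nu> (\<lambda>\<omega>. X \<omega> + Y \<omega>) - (Ch M \<nu> X + Ch M \<nu> Y) > 0" by simp
    obtain N :: nat where N: "2 * K / (Ch M \<nu> (\<lambda>\<omega>. X \<omega> + Y \<omega>) - (Ch M \<nu> X + Ch M \<nu> Y)) < real N"
      using reals_Archimedean2 by blast
    have Np: "N > 0" using N d K by (metis divide_pos_pos mult_pos_pos not_gr0 of_nat_0 order.asym zero_less_numeral)
    have "2 * K / real N < Ch M \<nu> (\<lambda>\<omega>. X \<omega> + Y \<omega>) - (Ch M \<nu> X + Ch M \<nu> Y)"
      using N d Np by (simp add: field_simps)
    then show False using b[OF Np] by linarith
  qed
qed

lemma Ch_coherent: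
  assumes cap: "capacity M \<nu>" and sub: "submodular_cap M \<nu>"
  shows "coherent M (Ch M \<nu>)"
  unfolding coherent_def
proof (intro conjI ballI allI impI)
  fix X Y assume "X \<in> bdd_meas M" "Y \<in> bdd_meas M" "\<forall>\<omega>\<in>space M. X \<omega> \<le> Y \<omega>"
  then show "Ch M \<nu> X \<le> Ch M \<nu> Y" using Ch_mono[OF cap] by blast
next
  fix X c assume "X \<in> bdd_meas M"
  then show "Ch M \<nu> (\<lambda>\<omega>. X \<omega> + c) = Ch M \<nu> X + c" using Ch_trans[OF cap] by blast
next
  fix X and l :: real assume "X \<in> bdd_meas M" "0 < l"
  then show "Ch M \<nu> (\<lambda>\<omega>. l * X \<omega>) = l * Ch M \<nu> X" using Ch_homog[OF cap] by blast
next
  fix X Y and l :: real assume X: "X \<in> bdd_meas M" and Y: "Y \<in> bdd_meas M" and l: "0 \<le> l \<and> l \<le> 1"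
  show "Ch M \<nu> (\<lambda>\<omega>. l * X \<omega> + (1 - l) * Y \<omega>) \<le> l * Ch M \<nu> X + (1 - l) * Ch M \<nu> Y"
  proof (cases "l = 0")
    case True then show ?thesis by simp
  next
    case l0: False
    show ?thesis
    proof (cases "l = 1")
      case True then show ?thesis by simp
    next
      case False
      then have lp: "0 < l" "0 < 1 - l" using l l0 by auto
      have "Ch M \<nu> (\<lambda>\<omega>. l * X \<omega> + (1 - l) * Y \<omega>) \<le> Ch M \<nu> (\<lambda>\<omega>. l * X \<omega>) + Ch M \<nu> (\<lambda>\<omega>. (1 - l) * Y \<omega>)"
        by (rule Ch_subadd[OF cap sub bdd_cmult[OF X] bdd_cmult[OF Y]])
      also have "\<dots> = l * Ch M \<nu> X + (1 - l) * Ch M \<nu> Y"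
        using Ch_homog[OF cap X lp(1)] Ch_homog[OF cap Y lp(2)] by simp
      finally show ?thesis .
    qed
  qed
qed

lemma coherent_cong:
  assumes "coherent M R" "\<And>X. X \<in> bdd_meas M \<Longrightarrow> R X = R' X"
  shows "coherent M R'"
proof -
  have a: "(\<lambda>\<omega>. l * X \<omega> + (1 - l) * Y \<omega>) \<in> bdd_meas M" if "X \<in> bdd_meas M" "Y \<in> bdd_meas M" for X Y l
    by (rule bdd_add[OF bdd_cmult bdd_cmult]) (use that in auto)
  show ?thesis
    using assms(1) unfolding coherent_def
    by (simp add: assms(2) bdd_addc bdd_cmult a)
qed



lemma ES_Ch:
  assumes cap: "capacity M w" and \<alpha>: "0 < \<alpha>" "\<alpha> \<le> 1" and X: "X \<in> bdd_meas M"
  shows "ES M w \<alpha> X = Ch M (\<lambda>E. min (w E / \<alpha>) 1) X"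
proof -
  have Xm[measurable]: "X \<in> borel_measurable M" using bdd_measD[OF X] by auto
  obtain K where K: "K > 0" "\<forall>\<omega>\<in>space M. \<bar>X \<omega>\<bar> \<le> K" using bdd_measD[OF X] by auto
  define g where "g x = w (Uset M X x)" for x
  define q where "q t = VaR M w X t" for t
  have q_def': "q t = Inf {x. g x \<le> t}" for t
    unfolding q_def VaR_def g_def Uset_def ..
  have g_anti: "g y \<le> g x" if "x \<le> y" for x y
    unfolding g_def by (rule cap_mono[OF cap]) (use Uset_anti[OF that, of M X] in auto)
  have g_meas[measurable]: "g \<in> borel_measurable borel"
    using antitone_meas[of g] g_anti by blast
  have g01: "0 \<le> g x" "g x \<le> 1" for x unfolding g_def using cap_bounds[OF cap] by auto
  have g_low: "g x = 1" if "x \<le> -K" for x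
    using U_low[of M X K x] K that cap unfolding g_def capacity_def by auto
  have g_high: "g x = 0" if "x > K" for x
    using U_high[of M X K x] K that cap unfolding g_def capacity_def by auto
  have S_ne: "K + 1 \<in> {x. g x \<le> t}" if "0 \<le> t" for t using g_high[of "K+1"] K that by auto
  have S_low: "-K < x" if "x \<in> {x. g x \<le> t}" "t < 1" for x t
    using g_low[of x] that by force
  have S_bdd: "bdd_below {x. g x \<le> t}" if "t < 1" for t
    using S_low[OF _ that] by (meson bdd_below.I less_imp_le)
  have q_lo: "-K \<le> q t" if "0 \<le> t" "t < 1" for t
    unfolding q_def' by (rule cInf_greatest) (use S_ne[OF that(1)] S_low[OF _ that(2)] in \<open>auto intro: less_imp_le\<close>)
  have q2: "t < g x" if "0 \<le> t" "t < 1" "x < q t" for t x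
  proof (rule ccontr)
    assume "\<not> t < g x"
    then have "q t \<le> x" unfolding q_def' by (intro cInf_lower S_bdd that) auto
    then show False using that by auto
  qed
  have q3: "g x \<le> t" if t0: "0 \<le> t" and t1: "t < 1" and qx: "q t < x" for t x
  proof -
    obtain y where "y \<in> {x. g x \<le> t}" "y < x"
      using qx unfolding q_def' by (subst (asm) cInf_less_iff) (use S_ne[OF t0] S_bdd[OF t1] in auto)
    then show ?thesis using g_anti[of y x] by auto
  qed
  have q_hi: "q t \<le> K" if "0 \<le> t" "t < 1" for t
  proof (rule ccontr)
    assume "\<not> q t \<le> K"
    then have "(q t + K) / 2 < q t" "K < (q t + K)/2" by auto
    then show False
      using q2[OF that, of "(q t + K) / 2"] g_high[of "(q t + K)/2"] that by auto
  qed
  have q_anti: "q t' \<le> q t" if "0 \<le> t" "t \<le> t'" "t' < 1" for t t'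
    unfolding q_def' by (rule cInf_superset_mono) (use S_ne[OF that(1)] S_bdd[of t'] that in auto)
  define f where "f t x = ennreal (indicator {0<..<\<alpha>} t * indicator {-K..K} x * (if t < g x then 1 else 0))" for t x
  have fm: "case_prod f \<in> borel_measurable (lborel \<Otimes>\<^sub>M lborel)" unfolding f_def by measurable
  have inner_t: "(\<integral>\<^sup>+t. f t x \<partial>lborel) = ennreal (indicator {-K..K} x * min \<alpha> (g x))" for x
  proof -
    have "(\<lambda>t. f t x) = (\<lambda>t. ennreal (indicator {-K..K} x) * indicator {0<..<min \<alpha> (g x)} t)"
      by (auto simp: fun_eq_iff f_def indicator_def)
    moreover have "emeasure lborel {0<..<min \<alpha> (g x)} = ennreal (min \<alpha> (g x))"
      using g01[of x] \<alpha> by simp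
    ultimately show ?thesis
      by (cases "x \<in> {-K..K}") (simp_all add: nn_integral_cmult_indicator)
  qed
  have inner_x: "(\<integral>\<^sup>+x. f t x \<partial>lborel) = ennreal (indicator {0<..<\<alpha>} t * (q t + K))" for t
  proof (cases "t \<in> {0<..<\<alpha>}")
    case False
    then have "(\<lambda>x. f t x) = (\<lambda>x. 0)" by (auto simp: fun_eq_iff f_def)
    then show ?thesis using False by simp
  next
    case True
    then have t0: "0 \<le> t" and t1: "t < 1" using \<alpha> by auto
    define Sx where "Sx = {x. -K \<le> x \<and> x \<le> K \<and> t < g x}"
    have Sxm: "Sx \<in> sets lborel" unfolding Sx_def by measurable
    have "(\<lambda>x. f t x) = indicator Sx" using True by (auto simp: fun_eq_iff f_def Sx_def indicator_def)
    then have e: "(\<integral>\<^sup>+x. f t x \<partial>lborel) = emeasure lborel Sx" using Sxm by simp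
    have sub1: "{-K..<q t} \<subseteq> Sx" unfolding Sx_def using q_hi[OF t0 t1] q2[OF t0 t1] by force
    have sub2: "Sx \<subseteq> {-K..q t}"
    proof
      fix x assume "x \<in> Sx"
      then have "-K \<le> x" "t < g x" unfolding Sx_def by auto
      moreover have "x \<le> q t" using q3[OF t0 t1, of x] \<open>t < g x\<close> by (cases "q t < x") auto
      ultimately show "x \<in> {-K..q t}" by auto
    qed
    have "emeasure lborel {-K..<q t} \<le> emeasure lborel Sx" by (rule emeasure_mono[OF sub1 Sxm])
    moreover have "emeasure lborel Sx \<le> emeasure lborel {-K..q t}" by (rule emeasure_mono[OF sub2]) simp
    ultimately have "emeasure lborel Sx = ennreal (q t + K)" using q_lo[OF t0 t1] by (auto intro: antisym)
    then show ?thesis using e True by simp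
  qed
  have fub: "(\<integral>\<^sup>+x. ennreal (indicator {-K..K} x * min \<alpha> (g x)) \<partial>lborel)
      = (\<integral>\<^sup>+t. ennreal (indicator {0<..<\<alpha>} t * (q t + K)) \<partial>lborel)"
    using lborel_pair.Fubini'[OF fm] unfolding inner_t inner_x .
  define \<phi> where "\<phi> t = indicator {0<..<\<alpha>} t * (q t + K)" for t
  define H where "H x = indicator {-K..K} x * min \<alpha> (g x)" for x
  have qmono: "mono_on {0<..<\<alpha>} (\<lambda>t. - q t)"
    by (rule mono_onI) (use q_anti \<alpha> in force)
  have "(\<lambda>t. - q t) \<in> borel_measurable (restrict_space borel {0<..<\<alpha>})"
    by (rule borel_measurable_mono_on_fnc[OF qmono])
  then have qm[measurable]: "(\<lambda>t. indicator {0<..<\<alpha>} t *\<^sub>R (- q t)) \<in> borel_measurable borel"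
    by (subst (asm) borel_measurable_restrict_space_iff) auto
  have \<phi>e: "\<phi> t = K * indicator {0<..<\<alpha>} t - indicator {0<..<\<alpha>} t *\<^sub>R (- q t)" for t
    unfolding \<phi>_def by (simp add: algebra_simps)
  have \<phi>i: "integrable lborel \<phi>"
  proof (rule integrable_supp[where B="2*K" and a=0 and b=\<alpha>])
    show "\<phi> \<in> borel_measurable borel" unfolding \<phi>e by measurable
    show "\<bar>\<phi> t\<bar> \<le> 2 * K" for t
      using q_lo[of t] q_hi[of t] \<alpha> K unfolding \<phi>_def by (auto simp: indicator_def)
    show "\<phi> t = 0" if "t \<notin> {0..\<alpha>}" for t using that unfolding \<phi>_def by auto
  qed
  have Hi: "integrable lborel H"
  proof (rule integrable_supp[where B=1 and a="-K" and b=K])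
    show "H \<in> borel_measurable borel" unfolding H_def by measurable
    show "\<bar>H x\<bar> \<le> 1" for x using g01[of x] \<alpha> unfolding H_def by (auto simp: indicator_def)
    show "H x = 0" if "x \<notin> {-K..K}" for x using that unfolding H_def by auto
  qed
  have \<phi>0: "0 \<le> \<phi> t" for t using q_lo[of t] \<alpha> unfolding \<phi>_def by (auto simp: indicator_def)
  have H0: "0 \<le> H x" for x using g01[of x] \<alpha> unfolding H_def by (auto simp: indicator_def)
  have HP0: "0 \<le> integral\<^sup>L lborel H" by (rule Bochner_Integration.integral_nonneg) (simp add: H0)
  have P0: "0 \<le> integral\<^sup>L lborel \<phi>" by (rule Bochner_Integration.integral_nonneg) (simp add: \<phi>0)
  have "ennreal (integral\<^sup>L lborel H) = ennreal (integral\<^sup>L lborel \<phi>)"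
    using fub unfolding H_def[symmetric] \<phi>_def[symmetric]
    by (simp add: nn_integral_eq_integral[OF Hi] nn_integral_eq_integral[OF \<phi>i] H0 \<phi>0)
  then have HP: "integral\<^sup>L lborel H = integral\<^sup>L lborel \<phi>" using HP0 P0 by simp
  have ind_i: "integrable lborel (\<lambda>t. K * indicator {0<..<\<alpha>} t :: real)"
    using \<alpha> by (intro integrable_mult_right integrable_real_indicator) auto
  have "(LBINT t=0..\<alpha>. q t) = (\<integral>t. indicator {0<..<\<alpha>} t * q t \<partial>lborel)"
    using \<alpha> by (simp add: interval_lebesgue_integral_def set_lebesgue_integral_def einterval_def zero_ereal_def greaterThanLessThan_def greaterThan_def lessThan_def Collect_conj_eq[symmetric])
  also have "\<dots> = (\<integral>t. \<phi> t - K * indicator {0<..<\<alpha>} t \<partial>lborel)"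
    by (rule Bochner_Integration.integral_cong) (auto simp: \<phi>_def algebra_simps)
  also have "\<dots> = integral\<^sup>L lborel \<phi> - K * \<alpha>"
    using \<phi>i ind_i \<alpha> by simp
  finally have ESe: "ES M w \<alpha> X = (1/\<alpha>) * integral\<^sup>L lborel \<phi> - K"
    unfolding ES_def q_def[symmetric] using \<alpha> by (simp add: field_simps)
  have "Ch M (\<lambda>E. min (w E / \<alpha>) 1) X = (\<integral>x. (1/\<alpha>) * H x - indicator {-K..0} x \<partial>lborel)"
    unfolding Ch_def
  proof (rule Bochner_Integration.integral_cong)
    fix x
    show "min (w (Uset M X x) / \<alpha>) 1 - indicator {..0} x = (1/\<alpha>) * H x - indicator {-K..0} x"
    proof (cases "x < -K")
      case True then show ?thesis using g_low[of x] \<alpha> K unfolding H_def g_def[symmetric] by (auto simp: indicator_def)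
    next
      case False
      show ?thesis
      proof (cases "x > K")
        case True
        then show ?thesis using \<alpha> g_high[of x] K unfolding H_def g_def[symmetric]
          by (auto simp: indicator_def)
      next
        case False2: False
        then have "x \<in> {-K..K}" using False by auto
        then show ?thesis using \<alpha> g01[of x] unfolding H_def g_def[symmetric]
          by (auto simp: indicator_def min_def field_simps)
      qed
    qed
  qed simp
  also have "\<dots> = (1/\<alpha>) * integral\<^sup>L lborel H - K"
    using Hi K by simp
  finally show ?thesis using ESe HP by simp
qed



lemma Ch_le_nu:
  assumes c1: "capacity M \<nu>1" and c2: "capacity M \<nu>2" and X: "X \<in> bdd_meas M"
    and le: "\<And>E. E \<in> sets M \<Longrightarrow> \<nu>1 E \<le> \<nu>2 E"
  shows "Ch M \<nu>1 X \<le> Ch M \<nu>2 X"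
  unfolding Ch_def
  by (rule integral_mono[OF Ch_integrable[OF c1 X] Ch_integrable[OF c2 X]])
     (use le Uset_sets bdd_measD(1)[OF X] in auto)

lemma nu_cap:
  assumes cap: "capacity M w" and \<alpha>: "0 < \<alpha>" "\<alpha> \<le> 1"
  shows "capacity M (\<lambda>E. min (w E / \<alpha>) 1)"
  unfolding capacity_def
proof (intro conjI ballI impI)
  fix A B assume "A \<in> sets M" "B \<in> sets M" "A \<subseteq> B"
  then have "w A \<le> w B" using cap_mono[OF cap] by auto
  then show "min (w A / \<alpha>) 1 \<le> min (w B / \<alpha>) 1" using \<alpha> by (auto simp: divide_right_mono min_def)
next
  show "min (w {} / \<alpha>) 1 = 0" using cap by (simp add: capacity_def)
  show "min (w (space M) / \<alpha>) 1 = 1" using cap \<alpha> by (simp add: capacity_def field_simps)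
qed

lemma nu_sub:
  assumes cap: "capacity M w" and sub: "submodular_cap M w" and \<alpha>: "0 < \<alpha>" "\<alpha> \<le> 1"
  shows "submodular_cap M (\<lambda>E. min (w E / \<alpha>) 1)"
  unfolding submodular_cap_def
proof (intro ballI)
  fix A B assume A: "A \<in> sets M" and B: "B \<in> sets M"
  have s: "w (A \<union> B) + w (A \<inter> B) \<le> w A + w B" using sub A B unfolding submodular_cap_def by blast
  have m1: "w (A \<inter> B) \<le> w A" "w (A \<inter> B) \<le> w B" using cap_mono[OF cap] A B by auto
  have m2: "w A \<le> w (A \<union> B)" "w B \<le> w (A \<union> B)" using cap_mono[OF cap] A B by auto
  show "min (w (A \<union> B) / \<alpha>) 1 + min (w (A \<inter> B) / \<alpha>) 1 \<le> min (w A / \<alpha>) 1 + min (w B / \<alpha>) 1"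
  proof (cases "w A \<ge> \<alpha> \<or> w B \<ge> \<alpha>")
    case True
    then show ?thesis
    proof
      assume "w A \<ge> \<alpha>"
      then have "min (w A / \<alpha>) 1 = 1" using \<alpha> by (auto simp: min_def field_simps)
      moreover have "min (w (A \<inter> B) / \<alpha>) 1 \<le> min (w B / \<alpha>) 1"
        using m1 \<alpha> by (auto simp: divide_right_mono min_def)
      ultimately show ?thesis by linarith
    next
      assume "w B \<ge> \<alpha>"
      then have "min (w B / \<alpha>) 1 = 1" using \<alpha> by (auto simp: min_def field_simps)
      moreover have "min (w (A \<inter> B) / \<alpha>) 1 \<le> min (w A / \<alpha>) 1"
        using m1 \<alpha> by (auto simp: divide_right_mono min_def)
      ultimately show ?thesis by linarith
    qed
  next
    case False
    then have "min (w A / \<alpha>) 1 = w A / \<alpha>" "min (w B / \<alpha>) 1 = w B / \<alpha>"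
      using \<alpha> by (auto simp: min_def field_simps)
    moreover have "(w (A \<union> B) + w (A \<inter> B)) / \<alpha> \<le> (w A + w B) / \<alpha>"
      using s \<alpha> by (simp add: divide_right_mono)
    ultimately show ?thesis by (simp add: add_divide_distrib)
  qed
qed

lemma Ch_two_ind:
  assumes cap: "capacity M \<nu>" and A: "A \<in> sets M" and B: "B \<in> sets M"
  shows "Ch M \<nu> (\<lambda>\<omega>. indicator A \<omega> + indicator B \<omega>) = \<nu> (A \<union> B) + \<nu> (A \<inter> B)"
proof -
  have sA: "A \<subseteq> space M" "B \<subseteq> space M" using A B sets.sets_into_space by auto
  have "Ch M \<nu> (\<lambda>\<omega>. indicator A \<omega> + indicator B \<omega>) =
     (\<integral>x. \<nu> (A \<union> B) * indicator {0<..1::real} x + \<nu> (A \<inter> B) * indicator {1<..2::real} x \<partial>lborel)"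
    unfolding Ch_def
  proof (rule Bochner_Integration.integral_cong)
    fix x :: real
    let ?Z = "\<lambda>\<omega>. indicator A \<omega> + indicator B \<omega> :: real"
    consider "x \<le> 0" | "0 < x \<and> x \<le> 1" | "1 < x \<and> x \<le> 2" | "2 < x" by linarith
    then show "\<nu> (Uset M ?Z x) - indicator {..0} x
      = \<nu> (A \<union> B) * indicator {0<..1} x + \<nu> (A \<inter> B) * indicator {1<..2} x"
    proof cases
      case 1
      then have "Uset M ?Z x = space M" unfolding Uset_def by (auto simp: indicator_def)
      then show ?thesis using 1 cap by (simp add: capacity_def)
    next
      case 2
      then have "Uset M ?Z x = A \<union> B" unfolding Uset_def using sA by (auto simp: indicator_def)
      then show ?thesis using 2 by simp
    next
      case 3
      then have "Uset M ?Z x = A \<inter> B" unfolding Uset_def using sA by (auto simp: indicator_def)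
      then show ?thesis using 3 by simp
    next
      case 4
      then have "Uset M ?Z x = {}" unfolding Uset_def by (auto simp: indicator_def)
      then show ?thesis using 4 cap by (simp add: capacity_def)
    qed
  qed simp
  also have "\<dots> = \<nu> (A \<union> B) + \<nu> (A \<inter> B)"
    by (subst Bochner_Integration.integral_add) (auto intro!: integrable_real_indicator)
  finally show ?thesis .
qed

lemma bdd_ind: "A \<in> sets M \<Longrightarrow> (\<lambda>\<omega>. c * indicator A \<omega>) \<in> bdd_meas M"
  by (rule bdd_measI[where K="\<bar>c\<bar>"]) (auto simp: indicator_def)

theorem corollary3:
  fixes M :: "'a measure" and w :: "'a set \<Rightarrow> real"
  assumes "capacity M w"
  shows "((\<forall>\<alpha>\<in>{0<..1}. coherent M (ES M w \<alpha>)) \<and>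
          (\<forall>X\<in>bdd_meas M. \<forall>\<alpha>\<in>{0<..1}. \<forall>\<beta>\<in>{0<..1}. \<alpha> \<le> \<beta> \<longrightarrow> ES M w \<alpha> X \<ge> ES M w \<beta> X))
         \<longleftrightarrow> submodular_cap M w"
proof
  assume sub: "submodular_cap M w"
  have coh: "coherent M (ES M w \<alpha>)" if "\<alpha> \<in> {0<..1}" for \<alpha>
  proof (rule coherent_cong)
    show "coherent M (Ch M (\<lambda>E. min (w E / \<alpha>) 1))"
      using Ch_coherent nu_cap[OF assms] nu_sub[OF assms sub] that by auto
    show "Ch M (\<lambda>E. min (w E / \<alpha>) 1) X = ES M w \<alpha> X" if "X \<in> bdd_meas M" for X
      using ES_Ch[OF assms _ _ that] \<open>\<alpha> \<in> {0<..1}\<close> by auto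
  qed
  have dec: "ES M w \<alpha> X \<ge> ES M w \<beta> X"
    if X: "X \<in> bdd_meas M" and a: "\<alpha> \<in> {0<..1}" and b: "\<beta> \<in> {0<..1}" and ab: "\<alpha> \<le> \<beta>" for X \<alpha> \<beta>
  proof -
    have "Ch M (\<lambda>E. min (w E / \<beta>) 1) X \<le> Ch M (\<lambda>E. min (w E / \<alpha>) 1) X"
    proof (rule Ch_le_nu[OF _ _ X])
      show "capacity M (\<lambda>E. min (w E / \<beta>) 1)" "capacity M (\<lambda>E. min (w E / \<alpha>) 1)"
        using nu_cap[OF assms] a b by auto
      fix E assume "E \<in> sets M"
      then have "0 \<le> w E" using cap_bounds[OF assms] by auto
      then have "w E / \<beta> \<le> w E / \<alpha>" using a ab by (auto intro: divide_left_mono)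
      then show "min (w E / \<beta>) 1 \<le> min (w E / \<alpha>) 1" by auto
    qed
    then show ?thesis using ES_Ch[OF assms _ _ X, of \<alpha>] ES_Ch[OF assms _ _ X, of \<beta>] a b by auto
  qed
  show "(\<forall>\<alpha>\<in>{0<..1}. coherent M (ES M w \<alpha>)) \<and>
          (\<forall>X\<in>bdd_meas M. \<forall>\<alpha>\<in>{0<..1}. \<forall>\<beta>\<in>{0<..1}. \<alpha> \<le> \<beta> \<longrightarrow> ES M w \<alpha> X \<ge> ES M w \<beta> X)"
    using coh dec by blast
next
  assume "(\<forall>\<alpha>\<in>{0<..1}. coherent M (ES M w \<alpha>)) \<and>
          (\<forall>X\<in>bdd_meas M. \<forall>\<alpha>\<in>{0<..1}. \<forall>\<beta>\<in>{0<..1}. \<alpha> \<le> \<beta> \<longrightarrow> ES M w \<alpha> X \<ge> ES M w \<beta> X)"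
  then have coh: "coherent M (ES M w 1)" by auto
  let ?\<nu> = "\<lambda>E. min (w E / 1) 1"
  have c1: "capacity M ?\<nu>" using nu_cap[OF assms, of 1] by simp
  have nuw: "?\<nu> E = w E" if "E \<in> sets M" for E using cap_bounds[OF assms that] by simp
  have EC: "ES M w 1 X = Ch M ?\<nu> X" if "X \<in> bdd_meas M" for X using ES_Ch[OF assms _ _ that] by simp
  show "submodular_cap M w"
    unfolding submodular_cap_def
  proof (intro ballI)
    fix A B assume A: "A \<in> sets M" and B: "B \<in> sets M"
    have XA: "(\<lambda>\<omega>. 2 * indicator A \<omega>) \<in> bdd_meas M" and XB: "(\<lambda>\<omega>. 2 * indicator B \<omega>) \<in> bdd_meas M"
      using bdd_ind A B by auto
    have cv: "ES M w 1 (\<lambda>\<omega>. (1/2) * (2 * indicator A \<omega>) + (1 - 1/2) * (2 * indicator B \<omega>))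
        \<le> (1/2) * ES M w 1 (\<lambda>\<omega>. 2 * indicator A \<omega>) + (1 - 1/2) * ES M w 1 (\<lambda>\<omega>. 2 * indicator B \<omega>)"
    proof -
      have hc: "\<forall>X\<in>bdd_meas M. \<forall>Y\<in>bdd_meas M. \<forall>l::real. 0 \<le> l \<and> l \<le> 1 \<longrightarrow>
        ES M w 1 (\<lambda>\<omega>. l * X \<omega> + (1 - l) * Y \<omega>) \<le> l * ES M w 1 X + (1 - l) * ES M w 1 Y"
        using coh unfolding coherent_def by blast
      have "0 \<le> (1/2::real) \<and> (1/2::real) \<le> 1" by simp
      from hc[rule_format, OF XA XB this] show ?thesis .
    qed
    have f1: "(\<lambda>\<omega>. (1/2) * (2 * indicator A \<omega>) + (1 - 1/2) * (2 * indicator B \<omega>)) =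
       (\<lambda>\<omega>. indicator A \<omega> + indicator B \<omega> :: real)" by auto
    have f2: "(\<lambda>\<omega>. 2 * indicator A \<omega>) = (\<lambda>\<omega>. indicator A \<omega> + indicator A \<omega> :: real)" by auto
    have f3: "(\<lambda>\<omega>. 2 * indicator B \<omega>) = (\<lambda>\<omega>. indicator B \<omega> + indicator B \<omega> :: real)" by auto
    have AB: "(\<lambda>\<omega>. indicator A \<omega> + indicator B \<omega> :: real) \<in> bdd_meas M"
      using bdd_add[OF bdd_ind[OF A, of 1] bdd_ind[OF B, of 1]] by simp
    have "ES M w 1 (\<lambda>\<omega>. indicator A \<omega> + indicator B \<omega>) = w (A \<union> B) + w (A \<inter> B)"
      using EC[OF AB] Ch_two_ind[OF c1 A B] nuw A B by auto
    moreover have "ES M w 1 (\<lambda>\<omega>. 2 * indicator A \<omega>) = 2 * w A"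
      using EC[OF XA] Ch_two_ind[OF c1 A A] nuw A unfolding f2 by auto
    moreover have "ES M w 1 (\<lambda>\<omega>. 2 * indicator B \<omega>) = 2 * w B"
      using EC[OF XB] Ch_two_ind[OF c1 B B] nuw B unfolding f3 by auto
    ultimately show "w (A \<union> B) + w (A \<inter> B) \<le> w A + w B" using cv unfolding f1 by simp
  qed
qed

end
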